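(* Let $D$ be an integral domain with quotient field $K$, $T$ an overring of $D$, $\star$ a semistar operation on $D$ and $\star'$ a semistar operation on $T$. The following are equivalent: (i) $T$ is $(\star,\star')$-linked to $D$; (ii) $\mathrm{Na}(D,\star)\subseteq\mathrm{Na}(T,\star')$; (iii) $\tilde\star\le(\widetilde{\star'})_D$, i.e. $E^{\tilde\star}\subseteq (ET)^{\widetilde{\star'}}$ for every $E\in\overline{\mathbf F}(D)$; (iv) $T$ is $(\tilde\star,\widetilde{\star'})$-linked to $D$; (v) $T^{\widetilde{\star'}}$ is an overring of $D^{\tilde\star}$ which is $(\dot{\tilde\star},\dot{\widetilde{\star'}})$-linked to $D^{\tilde\star}$.
   Context: Let $D$ be an integral domain with quotient field $K$. $\overline{\mathbf F}(D)$ denotes the set of all nonzero $D$-submodules of $K$ and $\mathbf f(D)$ the set of nonzero finitely generated $D$-submodules of $K$. A semistar operation on $D$ is a map $\star:\overline{\mathbf F}(D)\to\overline{\mathbf F}(D)$, $E\mapsto E^\star$, such that for all $0\ne x\in K$ and $E,F\in\overline{\mathbf F}(D)$: (1) $(xE)^\star=xE^\star$; (2) $E\subseteq F\Rightarrow E^\star\subseteq F^\star$; (3) $E\subseteq E^\star$ and $(E^\star)^\star=E^\star$. $\star_f$ is defined by $E^{\star_f}=\bigcup\{F^\star:F\in\mathbf f(D),F\subseteq E\}$. A nonzero ideal $I$ of $D$ is a quasi-$\star$-ideal if $I^\star\cap D=I$; a quasi-$\star$-maximal ideal is a maximal element among proper quasi-$\star$-ideals; $\mathcal M(\star_f)$ is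 the set of quasi-$\star_f$-maximal ideals of $D$, and $\tilde\star$ is the semistar operation $E^{\tilde\star}=\bigcap\{ED_Q:Q\in\mathcal M(\star_f)\}$ (equal to $K$ if $\mathcal M(\star_f)=\emptyset$). An overring of $D$ is a ring $T$ with $D\subseteq T\subseteq K$; all notions are defined analogously on $T$. For a semistar operation $\star$ on $D$, $\dot\star$ denotes the semistar operation $E\mapsto E^\star$ on the ring $D^\star$; similarly $\dot{\tilde\star}$ is $E\mapsto E^{\tilde\star}$ on $D^{\tilde\star}$ and $\dot{\widetilde{\star'}}$ is $E\mapsto E^{\widetilde{\star'}}$ on $T^{\widetilde{\star'}}$. $T$ is $(\star,\star')$-linked to $D$ if for every nonzero finitely generated ideal $F\subseteq D$ with $F^\star=D^\star$ one has $(FT)^{\star'}=T^{\star'}$. For $f\in D[X]$, $c(f)$ is its content; $\mathrm{Na}(D,\star):=D[X]_{N_D(\star)}$ with $N_D(\star)=\{h\in D[X]:h\ne0,\ c(h)^\star=D^\star\}$, and $\mathrm{Na}(T,\star')$ is defined analogously. *)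

theory Defs
  imports "HOL-Computational_Algebra.Polynomial" "HOL-Computational_Algebra.Fraction_Field"
begin

text \<open>The quotient field K is the ambient type 'k (a field); rings D, T are subsets of it.\<close>

definition subring :: "'k::field set \<Rightarrow> bool" where
  "subring R \<longleftrightarrow> 0 \<in> R \<and> 1 \<in> R \<and> (\<forall>x\<in>R. \<forall>y\<in>R. x + y \<in> R \<and> x - y \<in> R \<and> x * y \<in> R)"

definition domain_with_qf :: "'k::field set \<Rightarrow> bool" where
  "domain_with_qf D \<longleftrightarrow> subring D \<and>
     (\<forall>x::'k. \<exists>a\<in>D. \<exists>b\<in>D. b \<noteq> 0 \<and> x = a / b)"

definition overring :: "'k::field set \<Rightarrow> 'k set \<Rightarrow> bool" where
  "overring R S \<longleftrightarrow> subring S \<and> R \<subseteq> S"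

definition is_submod :: "'k::field set \<Rightarrow> 'k set \<Rightarrow> bool" where
  "is_submod R E \<longleftrightarrow> 0 \<in> E \<and> (\<forall>x\<in>E. \<forall>y\<in>E. x + y \<in> E) \<and> (\<forall>r\<in>R. \<forall>x\<in>E. r * x \<in> E)"

definition Fbar :: "'k::field set \<Rightarrow> 'k set set" where
  "Fbar R = {E. is_submod R E \<and> E \<noteq> {0}}"

definition gen :: "'k::field set \<Rightarrow> 'k list \<Rightarrow> 'k set" where
  "gen R xs = {(\<Sum>i<length xs. a i * xs ! i) | a. \<forall>i<length xs. a i \<in> R}"

definition fset :: "'k::field set \<Rightarrow> 'k set set" where
  "fset R = {F. (\<exists>xs. F = gen R xs) \<and> F \<noteq> {0}}"

definition smul :: "'k::field \<Rightarrow> 'k set \<Rightarrow> 'k set" where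
  "smul x E = (\<lambda>y. x * y) ` E"

definition modprod :: "'k::field set \<Rightarrow> 'k set \<Rightarrow> 'k set" where
  "modprod E F = {(\<Sum>i<n. e i * f i) | (n::nat) e f. \<forall>i<n. e i \<in> E \<and> f i \<in> F}"

definition semistar :: "'k::field set \<Rightarrow> ('k set \<Rightarrow> 'k set) \<Rightarrow> bool" where
  "semistar R st \<longleftrightarrow>
     (\<forall>E\<in>Fbar R. st E \<in> Fbar R) \<and>
     (\<forall>x E. x \<noteq> 0 \<longrightarrow> E \<in> Fbar R \<longrightarrow> st (smul x E) = smul x (st E)) \<and>
     (\<forall>E\<in>Fbar R. \<forall>F\<in>Fbar R. E \<subseteq> F \<longrightarrow> st E \<subseteq> st F) \<and>
     (\<forall>E\<in>Fbar R. E \<subseteq> st E \<and> st (st E) = st E)"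

definition star_f :: "'k::field set \<Rightarrow> ('k set \<Rightarrow> 'k set) \<Rightarrow> 'k set \<Rightarrow> 'k set" where
  "star_f R st E = \<Union>{st F | F. F \<in> fset R \<and> F \<subseteq> E}"

definition quasi_ideal :: "'k::field set \<Rightarrow> ('k set \<Rightarrow> 'k set) \<Rightarrow> 'k set \<Rightarrow> bool" where
  "quasi_ideal R st I \<longleftrightarrow> I \<subseteq> R \<and> is_submod R I \<and> I \<noteq> {0} \<and> st I \<inter> R = I"

definition quasi_max :: "'k::field set \<Rightarrow> ('k set \<Rightarrow> 'k set) \<Rightarrow> 'k set set" where
  "quasi_max R st = {Q. quasi_ideal R st Q \<and> Q \<noteq> R \<and>
      (\<forall>I. quasi_ideal R st I \<and> I \<noteq> R \<and> Q \<subseteq> I \<longrightarrow> I = Q)}"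

definition loc :: "'k::field set \<Rightarrow> 'k set \<Rightarrow> 'k set" where
  "loc R Q = {a / s | a s. a \<in> R \<and> s \<in> R \<and> s \<notin> Q}"

text \<open>\<open>\<tilde>\<star>\<close>; the intersection over the empty family is all of K.\<close>
definition tilde :: "'k::field set \<Rightarrow> ('k set \<Rightarrow> 'k set) \<Rightarrow> 'k set \<Rightarrow> 'k set" where
  "tilde R st E = (\<Inter>Q\<in>quasi_max R (star_f R st). modprod E (loc R Q))"

definition linked :: "'k::field set \<Rightarrow> 'k set \<Rightarrow> ('k set \<Rightarrow> 'k set) \<Rightarrow> ('k set \<Rightarrow> 'k set) \<Rightarrow> bool" where
  "linked R S a b \<longleftrightarrow>
     (\<forall>F. F \<in> fset R \<and> F \<subseteq> R \<and> a F = a R \<longrightarrow> b (modprod F S) = b S)"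

definition poly_over :: "'k::field set \<Rightarrow> 'k poly \<Rightarrow> bool" where
  "poly_over R f \<longleftrightarrow> (\<forall>i. coeff f i \<in> R)"

definition content :: "'k::field set \<Rightarrow> 'k poly \<Rightarrow> 'k set" where
  "content R h = gen R (coeffs h)"

definition Nset :: "'k::field set \<Rightarrow> ('k set \<Rightarrow> 'k set) \<Rightarrow> 'k poly set" where
  "Nset R st = {h. poly_over R h \<and> h \<noteq> 0 \<and> st (content R h) = st R}"

definition Na :: "'k::field set \<Rightarrow> ('k set \<Rightarrow> 'k set) \<Rightarrow> 'k poly fract set" where
  "Na R st = {Fract f g | f g. poly_over R f \<and> g \<in> Nset R st}"

end

theory Submission
  imports Defs
begin

definition addcl :: "'k::field set \<Rightarrow> bool" where
  "addcl M \<longleftrightarrow> 0 \<in> M \<and> (\<forall>x\<in>M. \<forall>y\<in>M. x + y \<in> M)"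

lemma sum_closed:
  assumes "addcl M" "finite A" "\<forall>i\<in>A. g i \<in> M" shows "sum g A \<in> M"
  using assms(2,3)
proof (induction A rule: finite_induct)
  case empty then show ?case using assms(1) by (simp add: addcl_def)
next
  case (insert x F) then show ?case using assms(1) by (simp add: addcl_def)
qed

lemma sum_lessThan_add: "(\<Sum>i<(n::nat)+m. g i) = (\<Sum>i<n. g i) + (\<Sum>i<m. g (n+i))"
  by (induction m) (simp_all add: add.assoc)

lemma modprod_mem: "e \<in> E \<Longrightarrow> f \<in> F \<Longrightarrow> e * f \<in> modprod E F"
  unfolding modprod_def
  by (rule CollectI, rule exI[of _ 1], rule exI[of _ "\<lambda>_. e"], rule exI[of _ "\<lambda>_. f"]) simp

lemma modprod_zero: "0 \<in> modprod E F"
  unfolding modprod_def by (rule CollectI, rule exI[of _ 0]) simp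

lemma modprod_E:
  assumes "x \<in> modprod E F"
  obtains n :: nat and e f where "x = (\<Sum>i<n. e i * f i)" "\<forall>i<n. e i \<in> E \<and> f i \<in> F"
  using assms unfolding modprod_def by auto

lemma modprod_I:
  assumes "x = (\<Sum>i<(n::nat). e i * f i)" "\<forall>i<n. e i \<in> E \<and> f i \<in> F"
  shows "x \<in> modprod E F"
  using assms unfolding modprod_def by blast

lemma modprod_add:
  assumes "x \<in> modprod E F" "y \<in> modprod E F" shows "x + y \<in> modprod E F"
proof -
  obtain n :: nat and e f where x: "x = (\<Sum>i<n. e i * f i)" "\<forall>i<n. e i \<in> E \<and> f i \<in> F"
    using assms(1) by (rule modprod_E)
  obtain m :: nat and e' f' where y: "y = (\<Sum>i<m. e' i * f' i)" "\<forall>i<m. e' i \<in> E \<and> f' i \<in> F"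
    using assms(2) by (rule modprod_E)
  define E' where "E' = (\<lambda>i. if i < n then e i else e' (i - n))"
  define F' where "F' = (\<lambda>i. if i < n then f i else f' (i - n))"
  have "(\<Sum>i<n+m. E' i * F' i) = x + y"
    unfolding sum_lessThan_add x y E'_def F'_def by simp
  moreover have "\<forall>i<n+m. E' i \<in> E \<and> F' i \<in> F"
    using x y unfolding E'_def F'_def by auto
  ultimately show ?thesis by (intro modprod_I[where n="n+m" and e=E' and f=F']) auto
qed

lemma addcl_modprod: "addcl (modprod E F)"
  by (simp add: addcl_def modprod_zero modprod_add)

lemma modprod_least:
  assumes "addcl M" "\<And>e f. e \<in> E \<Longrightarrow> f \<in> F \<Longrightarrow> e * f \<in> M"
  shows "modprod E F \<subseteq> M"
proof
  fix x assume "x \<in> modprod E F"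
  then obtain n :: nat and e f where x: "x = (\<Sum>i<n. e i * f i)" "\<forall>i<n. e i \<in> E \<and> f i \<in> F"
    by (rule modprod_E)
  show "x \<in> M" unfolding x(1) by (rule sum_closed[OF assms(1)]) (use x(2) assms(2) in auto)
qed

lemma modprod_induct:
  assumes "x \<in> modprod E F" "P 0" "\<And>x y. P x \<Longrightarrow> P y \<Longrightarrow> P (x + y)"
    "\<And>e f. e \<in> E \<Longrightarrow> f \<in> F \<Longrightarrow> P (e * f)"
  shows "P x"
proof -
  have "modprod E F \<subseteq> {x. P x}"
    by (rule modprod_least) (use assms in \<open>auto simp: addcl_def\<close>)
  then show ?thesis using assms(1) by blast
qed

lemma modprod_mono: "E \<subseteq> E' \<Longrightarrow> F \<subseteq> F' \<Longrightarrow> modprod E F \<subseteq> modprod E' F'"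
  by (rule modprod_least[OF addcl_modprod]) (auto intro: modprod_mem)

lemma modprod_comm: "modprod E F = modprod F E"
  by (rule equalityI; rule modprod_least[OF addcl_modprod]; metis modprod_mem mult.commute)

lemma modprod_mul_right:
  assumes "\<forall>f\<in>F. r * f \<in> F" "x \<in> modprod E F" shows "r * x \<in> modprod E F"
proof -
  have "modprod E F \<subseteq> {x. r * x \<in> modprod E F}"
  proof (rule modprod_least)
    show "addcl {x. r * x \<in> modprod E F}"
      by (simp add: addcl_def distrib_left modprod_zero modprod_add)
    fix e f assume "e \<in> E" "f \<in> F"
    moreover have "r * (e * f) = e * (r * f)" by (simp add: algebra_simps)
    moreover have "r * f \<in> F" using assms(1) \<open>f \<in> F\<close> by blast
    ultimately have "e * (r * f) \<in> modprod E F" using modprod_mem by blast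
    then show "e * f \<in> {x. r * x \<in> modprod E F}" by (simp add: mult.left_commute)
  qed
  then show ?thesis using assms(2) by blast
qed

lemma modprod_mul_left:
  assumes "\<forall>e\<in>E. r * e \<in> E" "x \<in> modprod E F" shows "r * x \<in> modprod E F"
  using modprod_mul_right[of E r x F] assms modprod_comm by blast

lemma modprod_assoc:
  assumes "1 \<in> S" "\<forall>s\<in>S. \<forall>l\<in>L. s * l \<in> L"
  shows "modprod (modprod E S) L = modprod E L"
proof
  show "modprod (modprod E S) L \<subseteq> modprod E L"
  proof (rule modprod_least[OF addcl_modprod])
    fix x l assume x: "x \<in> modprod E S" and l: "l \<in> L"
    have "modprod E S \<subseteq> {x. x * l \<in> modprod E L}"
    proof (rule modprod_least)
      show "addcl {x. x * l \<in> modprod E L}"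
        by (simp add: addcl_def distrib_right modprod_zero modprod_add)
      fix e s assume "e \<in> E" "s \<in> S"
      moreover have "e * s * l = e * (s * l)" by (simp add: algebra_simps)
      moreover have "s * l \<in> L" using assms(2) \<open>s \<in> S\<close> l by blast
      ultimately have "e * (s * l) \<in> modprod E L" using modprod_mem by blast
      then show "e * s \<in> {x. x * l \<in> modprod E L}" by (simp add: mult.assoc)
    qed
    then show "x * l \<in> modprod E L" using x by blast
  qed
  show "modprod E L \<subseteq> modprod (modprod E S) L"
    by (rule modprod_least[OF addcl_modprod]) (metis assms(1) modprod_mem mult_1_right)
qed

lemma sr0: "subring R \<Longrightarrow> 0 \<in> R" by (simp add: subring_def)
lemma sr1: "subring R \<Longrightarrow> 1 \<in> R" by (simp add: subring_def)
lemma sr_add: "subring R \<Longrightarrow> x \<in> R \<Longrightarrow> y \<in> R \<Longrightarrow> x + y \<in> R" by (simp add: subring_def)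
lemma sr_diff: "subring R \<Longrightarrow> x \<in> R \<Longrightarrow> y \<in> R \<Longrightarrow> x - y \<in> R" by (simp add: subring_def)
lemma sr_mul: "subring R \<Longrightarrow> x \<in> R \<Longrightarrow> y \<in> R \<Longrightarrow> x * y \<in> R" by (simp add: subring_def)

lemma gen_I:
  assumes "x = (\<Sum>i<length xs. a i * xs ! i)" "\<forall>i<length xs. a i \<in> R"
  shows "x \<in> gen R xs"
  using assms unfolding gen_def by blast

lemma gen_eq:
  assumes "subring R" shows "gen R xs = modprod R (set xs)"
proof
  show "gen R xs \<subseteq> modprod R (set xs)"
  proof
    fix x assume "x \<in> gen R xs"
    then obtain a where a: "x = (\<Sum>i<length xs. a i * xs ! i)" "\<forall>i<length xs. a i \<in> R"
      unfolding gen_def by blast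
    show "x \<in> modprod R (set xs)"
      by (rule modprod_I[OF a(1)]) (use a(2) in auto)
  qed
  show "modprod R (set xs) \<subseteq> gen R xs"
  proof (rule modprod_least)
    show "addcl (gen R xs)" unfolding addcl_def
    proof (intro conjI ballI)
      show "0 \<in> gen R xs" by (rule gen_I[where a="\<lambda>_. 0"]) (simp_all add: sr0[OF assms])
      fix x y assume "x \<in> gen R xs" "y \<in> gen R xs"
      then obtain a b where a: "x = (\<Sum>i<length xs. a i * xs ! i)" "\<forall>i<length xs. a i \<in> R"
        and b: "y = (\<Sum>i<length xs. b i * xs ! i)" "\<forall>i<length xs. b i \<in> R"
        unfolding gen_def by blast
      show "x + y \<in> gen R xs"
        by (rule gen_I[where a="\<lambda>i. a i + b i"])
           (simp_all add: a b distrib_right sum.distrib sr_add[OF assms])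
    qed
    fix r x assume r: "r \<in> R" and x: "x \<in> set xs"
    then obtain k where k: "k < length xs" "x = xs ! k" by (metis in_set_conv_nth)
    have "(\<Sum>i<length xs. (if i = k then r else 0) * xs ! i) = (\<Sum>i<length xs. (if i = k then r * xs ! k else 0))"
      by (rule sum.cong) auto
    also have "\<dots> = r * x" using k by simp
    finally show "r * x \<in> gen R xs"
      by (intro gen_I[where a="\<lambda>i. if i = k then r else 0"]) (simp_all add: r sr0[OF assms])
  qed
qed

lemma addcl_submod: "is_submod R M \<Longrightarrow> addcl M"
  by (simp add: is_submod_def addcl_def)

lemma submod_modprod_left: "subring R \<Longrightarrow> is_submod R (modprod R S)"
  unfolding is_submod_def
  by (auto simp: modprod_zero modprod_add intro!: modprod_mul_left sr_mul)

lemma submod_modprod_right: "subring R \<Longrightarrow> is_submod R (modprod S R)"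
  using submod_modprod_left modprod_comm by metis

lemma submod_least: "is_submod R M \<Longrightarrow> S \<subseteq> M \<Longrightarrow> modprod R S \<subseteq> M"
  by (rule modprod_least[OF addcl_submod]) (auto simp: is_submod_def)

lemma submod_least': "is_submod R M \<Longrightarrow> S \<subseteq> M \<Longrightarrow> modprod S R \<subseteq> M"
  using submod_least modprod_comm by metis

lemma modprod_one_right: "1 \<in> F \<Longrightarrow> E \<subseteq> modprod E F"
  using modprod_mem[of _ E 1 F] by auto

lemma modprod_one_left: "1 \<in> E \<Longrightarrow> F \<subseteq> modprod E F"
  using modprod_one_right modprod_comm by metis

lemma modprod_submod_eq: "is_submod R M \<Longrightarrow> 1 \<in> R \<Longrightarrow> modprod M R = M"
  using submod_least'[of R M M] modprod_one_right[of R M] by auto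

lemma modprod_submod_eq': "is_submod R M \<Longrightarrow> 1 \<in> R \<Longrightarrow> modprod R M = M"
  using modprod_submod_eq modprod_comm by metis

lemma submod_R: "subring R \<Longrightarrow> is_submod R R"
  by (simp add: is_submod_def subring_def)

lemma R_Fbar: "subring R \<Longrightarrow> R \<in> Fbar R"
  using sr1[of R] by (auto simp: Fbar_def submod_R)

lemma gen_submod: "subring R \<Longrightarrow> is_submod R (gen R xs)"
  by (simp add: gen_eq submod_modprod_left)

lemma fset_Fbar: "subring R \<Longrightarrow> F \<in> fset R \<Longrightarrow> F \<in> Fbar R"
  by (auto simp: fset_def Fbar_def gen_submod)

lemma gen_set: "subring R \<Longrightarrow> set xs \<subseteq> gen R xs"
  by (simp add: gen_eq modprod_one_left sr1)

lemma gen_least: "subring R \<Longrightarrow> is_submod R M \<Longrightarrow> set xs \<subseteq> M \<Longrightarrow> gen R xs \<subseteq> M"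
  by (simp add: gen_eq submod_least)

lemma gen_mono: "subring R \<Longrightarrow> set xs \<subseteq> set ys \<Longrightarrow> gen R xs \<subseteq> gen R ys"
  by (simp add: gen_eq modprod_mono)

lemma gen_single_Fbar: "subring R \<Longrightarrow> x \<noteq> 0 \<Longrightarrow> gen R [x] \<in> fset R"
  using gen_set[of R "[x]"] by (auto simp: fset_def)

lemma submod_mul: "is_submod R M \<Longrightarrow> r \<in> R \<Longrightarrow> x \<in> M \<Longrightarrow> r * x \<in> M"
  by (simp add: is_submod_def)

lemma submod_add: "is_submod R M \<Longrightarrow> x \<in> M \<Longrightarrow> y \<in> M \<Longrightarrow> x + y \<in> M"
  by (simp add: is_submod_def)

lemma submod_0: "is_submod R M \<Longrightarrow> 0 \<in> M"
  by (simp add: is_submod_def)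

lemma submod_one: "is_submod R M \<Longrightarrow> M \<subseteq> R \<Longrightarrow> 1 \<in> M \<Longrightarrow> M = R"
  using submod_mul[of R M _ 1] by auto

lemma smul_gen: "smul b (gen R xs) = gen R (map ((*) b) xs)"
proof
  have eq: "b * (\<Sum>i<length xs. a i * xs ! i) = (\<Sum>i<length (map ((*) b) xs). a i * map ((*) b) xs ! i)" for a
    by (simp add: sum_distrib_left algebra_simps)
  show "smul b (gen R xs) \<subseteq> gen R (map ((*) b) xs)"
  proof
    fix y assume "y \<in> smul b (gen R xs)"
    then obtain x where y: "y = b * x" and "x \<in> gen R xs" unfolding smul_def by blast
    then obtain a where a: "x = (\<Sum>i<length xs. a i * xs ! i)" "\<forall>i<length xs. a i \<in> R"
      unfolding gen_def by blast
    show "y \<in> gen R (map ((*) b) xs)"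
      by (rule gen_I[where a=a]) (simp_all only: y a eq, use a(2) in simp)
  qed
  show "gen R (map ((*) b) xs) \<subseteq> smul b (gen R xs)"
  proof
    fix y assume "y \<in> gen R (map ((*) b) xs)"
    then obtain a where a: "y = (\<Sum>i<length (map ((*) b) xs). a i * map ((*) b) xs ! i)" "\<forall>i<length (map ((*) b) xs). a i \<in> R"
      unfolding gen_def by blast
    have "(\<Sum>i<length xs. a i * xs ! i) \<in> gen R xs" by (rule gen_I[where a=a]) (use a(2) in simp_all)
    then show "y \<in> smul b (gen R xs)" unfolding smul_def a(1) eq[symmetric] by blast
  qed
qed

lemma st_Fbar: "semistar R st \<Longrightarrow> E \<in> Fbar R \<Longrightarrow> st E \<in> Fbar R"
  by (simp add: semistar_def)
lemma st_submod: "semistar R st \<Longrightarrow> E \<in> Fbar R \<Longrightarrow> is_submod R (st E)"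
  using st_Fbar[of R st E] by (simp add: Fbar_def)
lemma st_ext: "semistar R st \<Longrightarrow> E \<in> Fbar R \<Longrightarrow> E \<subseteq> st E"
  by (simp add: semistar_def)
lemma st_idem: "semistar R st \<Longrightarrow> E \<in> Fbar R \<Longrightarrow> st (st E) = st E"
  by (simp add: semistar_def)
lemma st_mono: "semistar R st \<Longrightarrow> E \<in> Fbar R \<Longrightarrow> F \<in> Fbar R \<Longrightarrow> E \<subseteq> F \<Longrightarrow> st E \<subseteq> st F"
  by (simp add: semistar_def)
lemma st_smul: "semistar R st \<Longrightarrow> x \<noteq> 0 \<Longrightarrow> E \<in> Fbar R \<Longrightarrow> st (smul x E) = smul x (st E)"
  by (simp add: semistar_def)

lemma st_one:
  assumes "subring R" "semistar R st" "G \<in> Fbar R" "G \<subseteq> R" "1 \<in> st G"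
  shows "st G = st R"
proof
  show "st G \<subseteq> st R" by (rule st_mono) (use assms R_Fbar in auto)
  have "R \<subseteq> st G" using submod_mul[OF st_submod[OF assms(2,3)] _ assms(5)] by auto
  then have "st R \<subseteq> st (st G)" by (rule st_mono[OF assms(2) R_Fbar[OF assms(1)] st_Fbar[OF assms(2,3)]])
  then show "st R \<subseteq> st G" using st_idem[OF assms(2,3)] by simp
qed

lemma sf_mem: "x \<in> star_f R st E \<longleftrightarrow> (\<exists>F. F \<in> fset R \<and> F \<subseteq> E \<and> x \<in> st F)"
  unfolding star_f_def by blast

lemma sf_mono: "E \<subseteq> E' \<Longrightarrow> star_f R st E \<subseteq> star_f R st E'"
  unfolding star_f_def by blast

lemma sf_fg:
  assumes "subring R" "semistar R st" "F \<in> fset R"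
  shows "star_f R st F = st F"
proof
  show "star_f R st F \<subseteq> st F"
  proof
    fix x assume "x \<in> star_f R st F"
    then obtain G where "G \<in> fset R" "G \<subseteq> F" "x \<in> st G" unfolding sf_mem by blast
    then show "x \<in> st F" using st_mono[OF assms(2) fset_Fbar[OF assms(1)] fset_Fbar[OF assms(1)]] assms(3) by blast
  qed
  show "st F \<subseteq> star_f R st F" using assms(3) unfolding star_f_def by blast
qed

lemma Fbar_nz:
  assumes "E \<in> Fbar R" obtains y where "y \<in> E" "y \<noteq> 0"
  using assms unfolding Fbar_def is_submod_def by blast

lemma sf_ext:
  assumes "subring R" "semistar R st" "E \<in> Fbar R"
  shows "E \<subseteq> star_f R st E"
proof
  fix x assume x: "x \<in> E"
  have E: "is_submod R E" using assms(3) by (simp add: Fbar_def)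
  obtain y where y: "y \<in> E" "y \<noteq> 0" using Fbar_nz[OF assms(3)] by blast
  show "x \<in> star_f R st E"
  proof (cases "x = 0")
    case True
    have "gen R [y] \<in> fset R" "gen R [y] \<subseteq> E"
      using gen_single_Fbar[OF assms(1) y(2)] gen_least[OF assms(1) E] y by auto
    moreover have "0 \<in> st (gen R [y])"
      using submod_0[OF st_submod[OF assms(2) fset_Fbar[OF assms(1)]]] calculation by blast
    ultimately show ?thesis unfolding sf_mem True by blast
  next
    case False
    have "gen R [x] \<in> fset R" "gen R [x] \<subseteq> E"
      using gen_single_Fbar[OF assms(1) False] gen_least[OF assms(1) E] x by auto
    moreover have "x \<in> st (gen R [x])"
      using st_ext[OF assms(2) fset_Fbar[OF assms(1)]] gen_set[OF assms(1), of "[x]"] calculation by auto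
    ultimately show ?thesis unfolding sf_mem by blast
  qed
qed

lemma sf_key:
  assumes "subring R" "semistar R st" "I \<in> Fbar R"
  shows "set xs \<subseteq> star_f R st I \<Longrightarrow> \<exists>ys. gen R ys \<in> fset R \<and> gen R ys \<subseteq> I \<and> set xs \<subseteq> st (gen R ys)"
proof (induction xs)
  case Nil
  have I: "is_submod R I" using assms(3) by (simp add: Fbar_def)
  obtain y where y: "y \<in> I" "y \<noteq> 0" using Fbar_nz[OF assms(3)] by blast
  have "gen R [y] \<in> fset R" "gen R [y] \<subseteq> I"
    using gen_single_Fbar[OF assms(1) y(2)] gen_least[OF assms(1) I] y by auto
  then show ?case by auto
next
  case (Cons x xs)
  have I: "is_submod R I" using assms(3) by (simp add: Fbar_def)
  from Cons obtain ys where ys: "gen R ys \<in> fset R" "gen R ys \<subseteq> I" "set xs \<subseteq> st (gen R ys)" by auto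
  have "x \<in> star_f R st I" using Cons.prems by simp
  then obtain F where F: "F \<in> fset R" "F \<subseteq> I" "x \<in> st F" unfolding sf_mem by blast
  then obtain zs where zs: "F = gen R zs" unfolding fset_def by blast
  have s1: "gen R ys \<subseteq> gen R (ys @ zs)" "gen R zs \<subseteq> gen R (ys @ zs)"
    by (simp_all add: gen_mono[OF assms(1)])
  have "set (ys @ zs) \<subseteq> I"
    using gen_set[OF assms(1), of ys] gen_set[OF assms(1), of zs] ys F zs by auto
  then have s2: "gen R (ys @ zs) \<subseteq> I" using gen_least[OF assms(1) I] by blast
  have "gen R ys \<noteq> {0}" "0 \<in> gen R ys" using ys(1) submod_0[OF gen_submod[OF assms(1)]] unfolding fset_def by auto
  then have "gen R (ys @ zs) \<noteq> {0}" using s1 by blast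
  then have f: "gen R (ys @ zs) \<in> fset R" unfolding fset_def by blast
  have "st (gen R ys) \<subseteq> st (gen R (ys @ zs))" "st F \<subseteq> st (gen R (ys @ zs))"
    using st_mono[OF assms(2) fset_Fbar[OF assms(1)] fset_Fbar[OF assms(1)]] ys(1) F(1) f s1 zs by auto
  then have "set (x # xs) \<subseteq> st (gen R (ys @ zs))" using ys(3) F(3) by auto
  then show ?case using f s2 by blast
qed

lemma sf_submod:
  assumes "subring R" "semistar R st" "I \<in> Fbar R"
  shows "is_submod R (star_f R st I)"
  unfolding is_submod_def
proof (intro conjI ballI)
  show "0 \<in> star_f R st I" using sf_ext[OF assms] assms(3) unfolding Fbar_def is_submod_def by blast
  fix x y assume "x \<in> star_f R st I" "y \<in> star_f R st I"
  then obtain ys where ys: "gen R ys \<in> fset R" "gen R ys \<subseteq> I" "set [x,y] \<subseteq> st (gen R ys)"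
    using sf_key[OF assms, of "[x,y]"] by auto
  then have "x + y \<in> st (gen R ys)"
    using submod_add[OF st_submod[OF assms(2) fset_Fbar[OF assms(1) ys(1)]]] by auto
  then show "x + y \<in> star_f R st I" using ys unfolding sf_mem by blast
next
  fix r x assume r: "r \<in> R" and "x \<in> star_f R st I"
  then obtain F where F: "F \<in> fset R" "F \<subseteq> I" "x \<in> st F" unfolding sf_mem by auto
  then have "r * x \<in> st F" using submod_mul[OF st_submod[OF assms(2) fset_Fbar[OF assms(1) F(1)]] r] by auto
  then show "r * x \<in> star_f R st I" using F unfolding sf_mem by blast
qed

lemma sf_idem:
  assumes "subring R" "semistar R st" "I \<in> Fbar R" "G \<in> fset R" "G \<subseteq> star_f R st I"
  shows "st G \<subseteq> star_f R st I"
proof -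
  obtain xs where xs: "G = gen R xs" using assms(4) unfolding fset_def by blast
  have "set xs \<subseteq> star_f R st I" using gen_set[OF assms(1), of xs] xs assms(5) by auto
  then obtain ys where ys: "gen R ys \<in> fset R" "gen R ys \<subseteq> I" "set xs \<subseteq> st (gen R ys)"
    using sf_key[OF assms(1-3)] by blast
  have Fy: "gen R ys \<in> Fbar R" using fset_Fbar[OF assms(1) ys(1)] .
  have "G \<subseteq> st (gen R ys)" unfolding xs
    by (rule gen_least[OF assms(1) st_submod[OF assms(2) Fy] ys(3)])
  then have "st G \<subseteq> st (st (gen R ys))"
    by (rule st_mono[OF assms(2) fset_Fbar[OF assms(1) assms(4)] st_Fbar[OF assms(2) Fy]])
  also have "\<dots> = st (gen R ys)" using st_idem[OF assms(2) Fy] .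
  also have "\<dots> \<subseteq> star_f R st I" using ys unfolding star_f_def by blast
  finally show ?thesis .
qed

lemma submod_inter: "is_submod R A \<Longrightarrow> is_submod R B \<Longrightarrow> is_submod R (A \<inter> B)"
  by (simp add: is_submod_def)

lemma quasi_closure:
  assumes "subring R" "semistar R st" "I \<subseteq> R" "I \<in> Fbar R"
  shows "quasi_ideal R (star_f R st) (star_f R st I \<inter> R)" "I \<subseteq> star_f R st I \<inter> R"
proof -
  show IJ: "I \<subseteq> star_f R st I \<inter> R" using sf_ext[OF assms(1,2,4)] assms(3) by blast
  have sub: "is_submod R (star_f R st I \<inter> R)"
    by (rule submod_inter[OF sf_submod[OF assms(1,2,4)] submod_R[OF assms(1)]])
  have nz: "star_f R st I \<inter> R \<noteq> {0}" using IJ assms(4) unfolding Fbar_def is_submod_def by blast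
  have JF: "star_f R st I \<inter> R \<in> Fbar R" using sub nz by (simp add: Fbar_def)
  have "star_f R st (star_f R st I \<inter> R) \<subseteq> star_f R st I"
  proof
    fix x assume "x \<in> star_f R st (star_f R st I \<inter> R)"
    then obtain G where G: "G \<in> fset R" "G \<subseteq> star_f R st I \<inter> R" "x \<in> st G" unfolding sf_mem by blast
    then show "x \<in> star_f R st I" using sf_idem[OF assms(1,2,4) G(1)] by blast
  qed
  moreover have "star_f R st I \<inter> R \<subseteq> star_f R st (star_f R st I \<inter> R)"
    by (rule sf_ext[OF assms(1,2) JF])
  ultimately show "quasi_ideal R (star_f R st) (star_f R st I \<inter> R)"
    unfolding quasi_ideal_def using sub nz by blast
qed

lemma qi_not_one: "quasi_ideal R s J \<Longrightarrow> J \<noteq> R \<Longrightarrow> 1 \<notin> J"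
  unfolding quasi_ideal_def using submod_one by blast

lemma chain_finite:
  assumes "chain\<^sub>\<subseteq> C" "C \<noteq> {}" "finite S" "S \<subseteq> \<Union>C"
  shows "\<exists>J\<in>C. S \<subseteq> J"
  using assms(3,4)
proof (induction S rule: finite_induct)
  case empty then show ?case using assms(2) by blast
next
  case (insert x S)
  then obtain J where J: "J \<in> C" "S \<subseteq> J" by blast
  obtain J' where J': "J' \<in> C" "x \<in> J'" using insert by blast
  from assms(1) J J' have "J \<subseteq> J' \<or> J' \<subseteq> J" unfolding chain_subset_def by blast
  then show ?case using J J' by blast
qed

lemma exists_qmax:
  assumes "subring R" "semistar R st" "quasi_ideal R (star_f R st) I" "I \<noteq> R"
  shows "\<exists>Q\<in>quasi_max R (star_f R st). I \<subseteq> Q"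
proof -
  define A where "A = {J. quasi_ideal R (star_f R st) J \<and> J \<noteq> R \<and> I \<subseteq> J}"
  have "\<forall>C\<in>chains A. \<exists>U\<in>A. \<forall>X\<in>C. X \<subseteq> U"
  proof
    fix C assume C: "C \<in> chains A"
    show "\<exists>U\<in>A. \<forall>X\<in>C. X \<subseteq> U"
    proof (cases "C = {}")
      case True then show ?thesis using assms(3,4) unfolding A_def by blast
    next
      case False
      have CA: "C \<subseteq> A" and ch: "chain\<^sub>\<subseteq> C" using C unfolding chains_def by auto
      have fin: "\<exists>J\<in>C. S \<subseteq> J" if "finite S" "S \<subseteq> \<Union>C" for S
        using chain_finite[OF ch False that] .
      have q: "quasi_ideal R (star_f R st) J" "J \<noteq> R" "I \<subseteq> J" if "J \<in> C" for J
        using that CA unfolding A_def by auto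
      have qs: "is_submod R J" "J \<subseteq> R" "star_f R st J \<inter> R = J" if "J \<in> C" for J
        using q(1)[OF that] unfolding quasi_ideal_def by blast+
      have UR: "\<Union>C \<subseteq> R"
      proof
        fix x assume "x \<in> \<Union>C"
        from this obtain J where J: "J \<in> C" and xJ: "x \<in> J" ..
        show "x \<in> R" using qs(2)[OF J] xJ by (rule subsetD)
      qed
      have Usub: "is_submod R (\<Union>C)" unfolding is_submod_def
      proof (intro conjI ballI)
        obtain J0 where J0: "J0 \<in> C" using False by blast
        have "0 \<in> J0" by (rule submod_0[OF qs(1)[OF J0]])
        then show "0 \<in> \<Union>C" using J0 by (rule UnionI[rotated])
        fix x y assume xy: "x \<in> \<Union>C" "y \<in> \<Union>C"
        have "{x,y} \<subseteq> \<Union>C" using xy by blast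
        then have "\<exists>J\<in>C. {x,y} \<subseteq> J" by (intro fin) simp_all
        from this obtain J where J: "J \<in> C" and xyJ: "{x,y} \<subseteq> J" ..
        have "x + y \<in> J" by (rule submod_add[OF qs(1)[OF J]]) (use xyJ in simp_all)
        then show "x + y \<in> \<Union>C" using J by (rule UnionI[rotated])
      next
        fix r x assume r: "r \<in> R" and "x \<in> \<Union>C"
        from this(2) obtain J where J: "J \<in> C" and xJ: "x \<in> J" ..
        have "r * x \<in> J" by (rule submod_mul[OF qs(1)[OF J] r xJ])
        then show "r * x \<in> \<Union>C" using J by (rule UnionI[rotated])
      qed
      obtain J1 where J1: "J1 \<in> C" using False by blast
      have IU: "I \<subseteq> \<Union>C" using q(3)[OF J1] J1 by blast
      have Inz: "I \<noteq> {0}" and I0: "0 \<in> I" using assms(3) submod_0[of R I] unfolding quasi_ideal_def by auto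
      have Unz: "\<Union>C \<noteq> {0}"
      proof
        assume "\<Union>C = {0}"
        then have "I \<subseteq> {0}" using IU by simp
        then show False using Inz I0 by blast
      qed
      have UF: "\<Union>C \<in> Fbar R" using Usub Unz by (simp add: Fbar_def)
      have "star_f R st (\<Union>C) \<inter> R \<subseteq> \<Union>C"
      proof
        fix x assume "x \<in> star_f R st (\<Union>C) \<inter> R"
        then have x1: "x \<in> star_f R st (\<Union>C)" and xR: "x \<in> R" by simp_all
        from x1 obtain G where G: "G \<in> fset R" "G \<subseteq> \<Union>C" "x \<in> st G" unfolding sf_mem by blast
        obtain xs where xs: "G = gen R xs" using G(1) unfolding fset_def by blast
        have "set xs \<subseteq> \<Union>C" using gen_set[OF assms(1), of xs] xs G(2) by blast
        then have "\<exists>J\<in>C. set xs \<subseteq> J" by (intro fin) simp_all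
        from this obtain J where J: "J \<in> C" "set xs \<subseteq> J" ..
        have "G \<subseteq> J" unfolding xs by (rule gen_least[OF assms(1) qs(1)[OF J(1)] J(2)])
        then have "x \<in> star_f R st J" using G unfolding sf_mem by blast
        then have "x \<in> star_f R st J \<inter> R" using xR by blast
        then have "x \<in> J" using qs(3)[OF J(1)] by simp
        then show "x \<in> \<Union>C" using J(1) by (rule UnionI[rotated])
      qed
      moreover have "\<Union>C \<subseteq> star_f R st (\<Union>C)" by (rule sf_ext[OF assms(1,2) UF])
      ultimately have "quasi_ideal R (star_f R st) (\<Union>C)"
        unfolding quasi_ideal_def using UR Usub Unz by blast
      moreover have "\<Union>C \<noteq> R"
      proof
        assume "\<Union>C = R"
        then have "1 \<in> \<Union>C" using sr1[OF assms(1)] by simp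
        from this obtain J where J: "J \<in> C" and "1 \<in> J" ..
        then show False using qi_not_one[OF q(1)[OF J] q(2)[OF J]] by simp
      qed
      ultimately have "\<Union>C \<in> A" using IU unfolding A_def by blast
      then show ?thesis by blast
    qed
  qed
  then obtain M where M: "M \<in> A" "\<forall>X\<in>A. M \<subseteq> X \<longrightarrow> X = M" using Zorn_Lemma2[of A] by blast
  have "M \<in> quasi_max R (star_f R st)"
    unfolding quasi_max_def using M unfolding A_def by blast
  then show ?thesis using M(1) unfolding A_def by blast
qed

definition prm :: "'k::field set \<Rightarrow> 'k set \<Rightarrow> bool" where
  "prm R Q \<longleftrightarrow> is_submod R Q \<and> Q \<subseteq> R \<and> 1 \<notin> Q \<and> (\<forall>a\<in>R. \<forall>b\<in>R. a * b \<in> Q \<longrightarrow> a \<in> Q \<or> b \<in> Q)"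

lemma qmax_qi: "Q \<in> quasi_max R s \<Longrightarrow> quasi_ideal R s Q"
  by (simp add: quasi_max_def)
lemma qmax_ne: "Q \<in> quasi_max R s \<Longrightarrow> Q \<noteq> R"
  by (simp add: quasi_max_def)

lemma qmax_prm:
  assumes R: "subring R" and st: "semistar R st" and Q: "Q \<in> quasi_max R (star_f R st)"
  shows "prm R Q"
proof -
  have qi: "quasi_ideal R (star_f R st) Q" using Q by (simp add: quasi_max_def)
  have QR: "Q \<subseteq> R" and Qs: "is_submod R Q" and Qc: "star_f R st Q \<inter> R = Q"
    using qi unfolding quasi_ideal_def by auto
  have one: "1 \<notin> Q" using qi_not_one[OF qi qmax_ne[OF Q]] .
  have "b \<in> Q" if a: "a \<in> R" and b: "b \<in> R" and ab: "a * b \<in> Q" and naQ: "a \<notin> Q" for a b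
  proof (cases "b = 0")
    case True then show ?thesis using submod_0[OF Qs] by simp
  next
    case False
    define I' where "I' = modprod R (insert a Q)"
    have I'R: "I' \<subseteq> R" unfolding I'_def by (rule submod_least[OF submod_R[OF R]]) (use a QR in auto)
    have I'sub: "is_submod R I'" unfolding I'_def by (rule submod_modprod_left[OF R])
    have ins: "insert a Q \<subseteq> I'" unfolding I'_def by (rule modprod_one_left[OF sr1[OF R]])
    have a0: "a \<noteq> 0" using naQ submod_0[OF Qs] by auto
    have I'F: "I' \<in> Fbar R" using I'sub ins a0 unfolding Fbar_def by auto
    note qc = quasi_closure[OF R st I'R I'F]
    have "star_f R st I' \<inter> R = R"
    proof (rule ccontr)
      assume "star_f R st I' \<inter> R \<noteq> R"
      then have "star_f R st I' \<inter> R = Q" using Q qc ins unfolding quasi_max_def by blast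
      then show False using qc(2) ins naQ by blast
    qed
    then have "1 \<in> star_f R st I'" using sr1[OF R] by blast
    then obtain G where G: "G \<in> fset R" "G \<subseteq> I'" "1 \<in> st G" unfolding sf_mem by blast
    obtain xs where xs: "G = gen R xs" using G(1) unfolding fset_def by blast
    obtain y where y: "y \<in> G" "y \<noteq> 0" using Fbar_nz[OF fset_Fbar[OF R G(1)]] by blast
    have "b * y \<in> smul b G" unfolding smul_def using y by blast
    moreover have "b * y \<noteq> 0" using y False by simp
    ultimately have bGf: "smul b G \<in> fset R" unfolding fset_def smul_gen xs by blast
    have "I' \<subseteq> {g. b * g \<in> Q}" unfolding I'_def
    proof (rule modprod_least)
      show "addcl {g. b * g \<in> Q}" unfolding addcl_def
        using submod_0[OF Qs] submod_add[OF Qs] by (simp add: distrib_left)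
      fix r c assume r: "r \<in> R" and c: "c \<in> insert a Q"
      show "r * c \<in> {g. b * g \<in> Q}"
      proof (cases "c = a")
        case True
        have "b * (r * c) = r * (a * b)" using True by (simp add: algebra_simps)
        then show ?thesis using submod_mul[OF Qs r ab] by (simp only: mem_Collect_eq)
      next
        case False
        then have cQ: "c \<in> Q" using c by blast
        have "b * (r * c) = (b * r) * c" by (simp add: algebra_simps)
        then show ?thesis using submod_mul[OF Qs sr_mul[OF R b r] cQ] by (simp only: mem_Collect_eq)
      qed
    qed
    then have bGQ: "smul b G \<subseteq> Q" using G(2) unfolding smul_def by blast
    have "b \<in> smul b (st G)" unfolding smul_def using G(3) by force
    also have "smul b (st G) = st (smul b G)" using st_smul[OF st False fset_Fbar[OF R G(1)]] by simp
    finally have "b \<in> star_f R st Q" using bGf bGQ unfolding sf_mem by blast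
    then show ?thesis using Qc b by blast
  qed
  then show ?thesis unfolding prm_def using QR Qs one by blast
qed

lemma prm_nz: "prm R Q \<Longrightarrow> s \<notin> Q \<Longrightarrow> s \<noteq> 0"
  unfolding prm_def using submod_0 by blast

lemma prm_mul: "prm R Q \<Longrightarrow> s \<in> R \<Longrightarrow> t \<in> R \<Longrightarrow> s \<notin> Q \<Longrightarrow> t \<notin> Q \<Longrightarrow> s * t \<notin> Q"
  unfolding prm_def by blast

lemma loc_mem: "a \<in> R \<Longrightarrow> s \<in> R \<Longrightarrow> s \<notin> Q \<Longrightarrow> a / s \<in> loc R Q"
  unfolding loc_def by blast

lemma loc_E: assumes "x \<in> loc R Q" obtains a s where "a \<in> R" "s \<in> R" "s \<notin> Q" "x = a / s"
  using assms unfolding loc_def by blast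

lemma loc_sub: "subring R \<Longrightarrow> prm R Q \<Longrightarrow> R \<subseteq> loc R Q"
proof
  fix a assume "subring R" "prm R Q" "a \<in> R"
  then have "a / 1 \<in> loc R Q" by (intro loc_mem) (auto simp: prm_def sr1)
  then show "a \<in> loc R Q" by simp
qed

lemma loc_add:
  assumes R: "subring R" and P: "prm R Q" and x: "x \<in> loc R Q" and y: "y \<in> loc R Q"
  shows "x + y \<in> loc R Q" "x - y \<in> loc R Q" "x * y \<in> loc R Q"
proof -
  obtain a s where a: "a \<in> R" "s \<in> R" "s \<notin> Q" "x = a / s" using x by (rule loc_E)
  obtain b t where b: "b \<in> R" "t \<in> R" "t \<notin> Q" "y = b / t" using y by (rule loc_E)
  have s0: "s \<noteq> 0" by (rule prm_nz[OF P a(3)])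
  have t0: "t \<noteq> 0" by (rule prm_nz[OF P b(3)])
  have st1: "s * t \<in> R" by (rule sr_mul[OF R a(2) b(2)])
  have st2: "s * t \<notin> Q" by (rule prm_mul[OF P a(2) b(2) a(3) b(3)])
  have e1: "x + y = (a * t + b * s) / (s * t)" unfolding a(4) b(4) using s0 t0 by (simp add: add_frac_eq)
  have "a * t + b * s \<in> R" by (rule sr_add[OF R sr_mul[OF R a(1) b(2)] sr_mul[OF R b(1) a(2)]])
  then show "x + y \<in> loc R Q" unfolding e1 by (rule loc_mem[OF _ st1 st2])
  have e2: "x - y = (a * t - b * s) / (s * t)" unfolding a(4) b(4) using s0 t0 by (simp add: diff_frac_eq)
  have "a * t - b * s \<in> R" by (rule sr_diff[OF R sr_mul[OF R a(1) b(2)] sr_mul[OF R b(1) a(2)]])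
  then show "x - y \<in> loc R Q" unfolding e2 by (rule loc_mem[OF _ st1 st2])
  have e3: "x * y = (a * b) / (s * t)" unfolding a(4) b(4) by simp
  have "a * b \<in> R" by (rule sr_mul[OF R a(1) b(1)])
  then show "x * y \<in> loc R Q" unfolding e3 by (rule loc_mem[OF _ st1 st2])
qed

lemma loc_subring:
  assumes R: "subring R" and P: "prm R Q" shows "subring (loc R Q)"
  unfolding subring_def[of "loc R Q"]
proof (intro conjI ballI)
  show "0 \<in> loc R Q" using loc_sub[OF R P] sr0[OF R] by (rule subsetD)
  show "1 \<in> loc R Q" using loc_sub[OF R P] sr1[OF R] by (rule subsetD)
  fix x y assume x: "x \<in> loc R Q" and y: "y \<in> loc R Q"
  show "x + y \<in> loc R Q" by (rule loc_add(1)[OF R P x y])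
  show "x - y \<in> loc R Q" by (rule loc_add(2)[OF R P x y])
  show "x * y \<in> loc R Q" by (rule loc_add(3)[OF R P x y])
qed

lemma loc_div:
  assumes R: "subring R" and P: "prm R Q" and x: "x \<in> loc R Q" and f: "f \<in> R" "f \<notin> Q"
  shows "x / f \<in> loc R Q"
proof -
  obtain a s where a: "a \<in> R" "s \<in> R" "s \<notin> Q" "x = a / s" using x by (rule loc_E)
  have eq: "x / f = a / (s * f)" using a by simp
  have "s * f \<in> R" by (rule sr_mul[OF R a(2) f(1)])
  moreover have "s * f \<notin> Q" by (rule prm_mul[OF P a(2) f(1) a(3) f(2)])
  ultimately have "a / (s * f) \<in> loc R Q" by (rule loc_mem[OF a(1)])
  then show ?thesis using eq by simp
qed

definition qfrac :: "'k::field set \<Rightarrow> 'k set \<Rightarrow> 'k set" where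
  "qfrac R Q = {q / s | q s. q \<in> Q \<and> s \<in> R \<and> s \<notin> Q}"

lemma qfrac_I: "q \<in> Q \<Longrightarrow> s \<in> R \<Longrightarrow> s \<notin> Q \<Longrightarrow> x = q / s \<Longrightarrow> x \<in> qfrac R Q"
  unfolding qfrac_def by blast

lemma qfrac_E: assumes "x \<in> qfrac R Q" obtains q s where "q \<in> Q" "s \<in> R" "s \<notin> Q" "x = q / s"
  using assms unfolding qfrac_def by blast

lemma loc_notone:
  assumes R: "subring R" and P: "prm R Q" and I: "I \<subseteq> Q"
  shows "1 \<notin> modprod I (loc R Q)"
proof -
  have Qs: "is_submod R Q" and QR: "Q \<subseteq> R" and Q1: "1 \<notin> Q" using P unfolding prm_def by auto
  have h1: "modprod Q (loc R Q) \<subseteq> qfrac R Q"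
  proof (rule modprod_least)
    show "addcl (qfrac R Q)" unfolding addcl_def
    proof (intro conjI ballI)
      show "0 \<in> qfrac R Q" by (rule qfrac_I[OF submod_0[OF Qs] sr1[OF R] Q1]) simp
      fix x y assume x: "x \<in> qfrac R Q" and y: "y \<in> qfrac R Q"
      obtain a s where a: "a \<in> Q" "s \<in> R" "s \<notin> Q" "x = a / s" using x by (rule qfrac_E)
      obtain b t where b: "b \<in> Q" "t \<in> R" "t \<notin> Q" "y = b / t" using y by (rule qfrac_E)
      have s0: "s \<noteq> 0" by (rule prm_nz[OF P a(3)])
      have t0: "t \<noteq> 0" by (rule prm_nz[OF P b(3)])
      have eq: "x + y = (t * a + s * b) / (s * t)" using a(4) b(4) s0 t0 by (simp add: field_simps)
      have "t * a + s * b \<in> Q"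
        by (rule submod_add[OF Qs submod_mul[OF Qs b(2) a(1)] submod_mul[OF Qs a(2) b(1)]])
      moreover have "s * t \<in> R" by (rule sr_mul[OF R a(2) b(2)])
      moreover have "s * t \<notin> Q" by (rule prm_mul[OF P a(2) b(2) a(3) b(3)])
      ultimately show "x + y \<in> qfrac R Q" using eq by (rule qfrac_I)
    qed
    fix q l assume q: "q \<in> Q" and l: "l \<in> loc R Q"
    obtain a s where a: "a \<in> R" "s \<in> R" "s \<notin> Q" "l = a / s" using l by (rule loc_E)
    have eq: "q * l = (a * q) / s" using a(4) by simp
    have "a * q \<in> Q" using submod_mul[OF Qs a(1) q] .
    then show "q * l \<in> qfrac R Q" using a(2,3) eq by (rule qfrac_I)
  qed
  have h2: "1 \<notin> qfrac R Q"
  proof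
    assume "1 \<in> qfrac R Q"
    then obtain q s where qs: "q \<in> Q" "s \<in> R" "s \<notin> Q" "1 = q / s" by (rule qfrac_E)
    have "s \<noteq> 0" by (rule prm_nz[OF P qs(3)])
    then have "q = s" using qs(4) by (simp add: eq_divide_eq)
    then show False using qs by simp
  qed
  have h3: "modprod I (loc R Q) \<subseteq> modprod Q (loc R Q)" by (rule modprod_mono[OF I order_refl])
  show ?thesis
  proof
    assume "1 \<in> modprod I (loc R Q)"
    then have "1 \<in> modprod Q (loc R Q)" by (rule subsetD[OF h3])
    then have "1 \<in> qfrac R Q" by (rule subsetD[OF h1])
    with h2 show False by (rule notE)
  qed
qed

lemma tilde_mem: "x \<in> tilde R st E \<longleftrightarrow> (\<forall>Q\<in>quasi_max R (star_f R st). x \<in> modprod E (loc R Q))"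
  unfolding tilde_def by blast

lemma loc_submod: "subring R \<Longrightarrow> prm R Q \<Longrightarrow> is_submod R (loc R Q)"
  using loc_subring[of R Q] loc_sub[of R Q] unfolding is_submod_def subring_def by blast

lemma modprod_R_loc: "subring R \<Longrightarrow> prm R Q \<Longrightarrow> modprod R (loc R Q) = loc R Q"
  by (metis loc_submod modprod_comm modprod_submod_eq sr1)

lemma tilde_R:
  assumes "subring R" "semistar R st"
  shows "tilde R st R = (\<Inter>Q\<in>quasi_max R (star_f R st). loc R Q)"
  unfolding tilde_def using modprod_R_loc[OF assms(1) qmax_prm[OF assms]] by simp

lemma tilde_R_subring:
  assumes "subring R" "semistar R st"
  shows "subring (tilde R st R)"
  unfolding tilde_R[OF assms] subring_def
proof (intro conjI ballI INT_I)
  fix Q assume Q: "Q \<in> quasi_max R (star_f R st)"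
  note L = loc_subring[OF assms(1) qmax_prm[OF assms Q]]
  show "0 \<in> loc R Q" by (rule sr0[OF L])
  show "1 \<in> loc R Q" by (rule sr1[OF L])
  fix x y assume x: "x \<in> (\<Inter>Q\<in>quasi_max R (star_f R st). loc R Q)" and y: "y \<in> (\<Inter>Q\<in>quasi_max R (star_f R st). loc R Q)"
  have "x \<in> loc R Q" "y \<in> loc R Q" using x y Q by blast+
  then show "x + y \<in> loc R Q" "x - y \<in> loc R Q" "x * y \<in> loc R Q"
    using sr_add[OF L] sr_diff[OF L] sr_mul[OF L] by blast+
qed

lemma R_sub_tilde:
  assumes "subring R" "semistar R st"
  shows "R \<subseteq> tilde R st R"
  unfolding tilde_R[OF assms] using loc_sub[OF assms(1) qmax_prm[OF assms]] by blast

lemma modprod_ring_eq: "subring L \<Longrightarrow> 1 \<in> S \<Longrightarrow> S \<subseteq> L \<Longrightarrow> modprod S L = L"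
  using modprod_one_left[of S L] modprod_least[of L S L] sr_mul[of L]
  by (auto simp: addcl_def subring_def)

lemma full_eq:
  assumes L: "subring L" and "X \<subseteq> S" "S \<subseteq> L" "1 \<in> modprod X L"
  shows "modprod X L = modprod S L"
proof
  show "modprod X L \<subseteq> modprod S L" using modprod_mono assms(2) by blast
  have "modprod S L \<subseteq> L" using modprod_least[of L S L] sr_mul[OF L] assms(3) L
    by (auto simp: addcl_def subring_def)
  moreover have "L \<subseteq> modprod X L"
  proof
    fix l assume "l \<in> L"
    then have "l * 1 \<in> modprod X L"
      using modprod_mul_right[OF _ assms(4), of l] sr_mul[OF L] by blast
    then show "l \<in> modprod X L" by simp
  qed
  ultimately show "modprod S L \<subseteq> modprod X L" by blast
qed

lemma assoc_sub: "subring L \<Longrightarrow> 1 \<in> S \<Longrightarrow> S \<subseteq> L \<Longrightarrow> modprod (modprod E S) L = modprod E L"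
  by (rule modprod_assoc) (auto simp: subring_def)

lemma tilde_cong:
  "(\<And>Q. Q \<in> quasi_max R (star_f R st) \<Longrightarrow> modprod E (loc R Q) = modprod E' (loc R Q)) \<Longrightarrow>
   tilde R st E = tilde R st E'"
  unfolding tilde_def by simp

lemma gen_ext:
  assumes D: "subring D" and T: "subring T" and DT: "D \<subseteq> T"
  shows "modprod (gen D xs) T = gen T xs"
proof -
  have "modprod (gen D xs) T = modprod (modprod (set xs) D) T"
    by (simp add: gen_eq[OF D] modprod_comm)
  also have "\<dots> = modprod (set xs) T" by (rule assoc_sub[OF T sr1[OF D] DT])
  finally show ?thesis by (simp add: gen_eq[OF T] modprod_comm)
qed

lemma fset_ext:
  assumes D: "subring D" and T: "subring T" and DT: "D \<subseteq> T" and F: "F \<in> fset D"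
  shows "modprod F T \<in> fset T"
proof -
  obtain xs where xs: "F = gen D xs" "F \<noteq> {0}" using F unfolding fset_def by blast
  have "F \<subseteq> modprod F T" by (rule modprod_one_right[OF sr1[OF T]])
  moreover have "0 \<in> F" using xs submod_0[OF gen_submod[OF D]] by blast
  ultimately have "modprod F T \<noteq> {0}" using xs(2) by blast
  then show ?thesis unfolding fset_def using gen_ext[OF D T DT, of xs] xs(1) by blast
qed

lemma FT_sub: "subring T \<Longrightarrow> F \<subseteq> T \<Longrightarrow> modprod F T \<subseteq> T"
  using submod_least'[OF submod_R] by blast

lemma coeffs_sub: "set (coeffs g) \<subseteq> range (coeff g)"
  by (auto simp: coeffs_def)

lemma coeffs_nz: "g \<noteq> 0 \<Longrightarrow> coeff g (degree g) \<in> set (coeffs g) \<and> coeff g (degree g) \<noteq> 0"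
  by (simp add: coeffs_def)

lemma content_fset:
  assumes R: "subring R" and g: "poly_over R g" "g \<noteq> 0"
  shows "content R g \<in> fset R" "content R g \<subseteq> R"
proof -
  have "coeff g (degree g) \<in> content R g" "coeff g (degree g) \<noteq> 0"
    using coeffs_nz[OF g(2)] gen_set[OF R, of "coeffs g"] unfolding content_def by auto
  then show "content R g \<in> fset R" unfolding content_def fset_def by blast
  have "set (coeffs g) \<subseteq> R" using coeffs_sub[of g] g(1) unfolding poly_over_def by blast
  then show "content R g \<subseteq> R" unfolding content_def by (rule gen_least[OF R submod_R[OF R]])
qed

lemma i_ii:
  assumes D: "subring D" and T: "subring T" and DT: "D \<subseteq> T"
    and lk: "linked D T st st'"
  shows "Na D st \<subseteq> Na T st'"
proof
  fix x assume "x \<in> Na D st"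
  then obtain f g where x: "x = Fract f g" "poly_over D f" "g \<in> Nset D st" unfolding Na_def by blast
  have g: "poly_over D g" "g \<noteq> 0" "st (content D g) = st D" using x(3) unfolding Nset_def by auto
  note cf = content_fset[OF D g(1,2)]
  have "st' (modprod (content D g) T) = st' T" using lk cf g(3) unfolding linked_def by blast
  moreover have "modprod (content D g) T = content T g" unfolding content_def by (rule gen_ext[OF D T DT])
  ultimately have "g \<in> Nset T st'" using g DT unfolding Nset_def poly_over_def by auto
  moreover have "poly_over T f" using x(2) DT unfolding poly_over_def by auto
  ultimately show "x \<in> Na T st'" unfolding Na_def using x(1) by blast
qed

lemma strip_set1: "set xs \<subseteq> insert 0 (set (strip_while ((=) 0) xs))"
  by (induction xs rule: rev_induct) auto

lemma strip_set2: "set (strip_while ((=) 0) xs) \<subseteq> set xs"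
  by (induction xs rule: rev_induct) auto

lemma gen_strip: "subring R \<Longrightarrow> gen R (strip_while ((=) 0) xs) = gen R xs"
proof -
  assume R: "subring R"
  have "set xs \<subseteq> gen R (strip_while ((=) 0) xs)"
    using strip_set1[of xs] gen_set[OF R] submod_0[OF gen_submod[OF R]] by blast
  then have "gen R xs \<subseteq> gen R (strip_while ((=) 0) xs)" by (rule gen_least[OF R gen_submod[OF R]])
  moreover have "gen R (strip_while ((=) 0) xs) \<subseteq> gen R xs"
    by (rule gen_mono[OF R strip_set2])
  ultimately show ?thesis by blast
qed

lemma ii_i:
  assumes D: "subring D" and T: "subring T" and DT: "D \<subseteq> T"
    and sts: "semistar D st" and sts': "semistar T st'"
    and na: "Na D st \<subseteq> Na T st'"
  shows "linked D T st st'"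
  unfolding linked_def
proof (intro allI impI, elim conjE)
  fix F assume F: "F \<in> fset D" "F \<subseteq> D" "st F = st D"
  obtain xs where xs: "F = gen D xs" "F \<noteq> {0}" using F(1) unfolding fset_def by blast
  have sx: "set xs \<subseteq> F" using gen_set[OF D] xs by blast
  define h where "h = Poly xs"
  have ch: "coeff h i \<in> F" for i
    unfolding h_def coeff_Poly_eq nth_default_def using sx submod_0[OF gen_submod[OF D]] xs(1) by auto
  have hD: "poly_over D h" using ch F(2) unfolding poly_over_def by blast
  have "\<exists>x\<in>set xs. x \<noteq> 0"
  proof (rule ccontr)
    assume "\<not> ?thesis"
    then have "set xs \<subseteq> {0}" by blast
    moreover have "is_submod D {0}" by (simp add: is_submod_def)
    ultimately have "F \<subseteq> {0}" using gen_least[OF D] xs(1) by blast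
    then show False using xs(2) submod_0[OF gen_submod[OF D]] xs(1) by blast
  qed
  then obtain k where k: "k < length xs" "xs ! k \<noteq> 0" by (metis in_set_conv_nth)
  have "coeff h k \<noteq> 0" using k unfolding h_def by (simp add: nth_default_def)
  then have h0: "h \<noteq> 0" by auto
  have "content D h = F" unfolding content_def h_def coeffs_Poly gen_strip[OF D] xs(1) ..
  then have "h \<in> Nset D st" using hD h0 F(3) unfolding Nset_def by auto
  moreover have "poly_over D 1" using sr0[OF D] sr1[OF D] unfolding poly_over_def
    by (simp add: coeff_1)
  ultimately have "Fract 1 h \<in> Na D st" unfolding Na_def by blast
  then have "Fract 1 h \<in> Na T st'" using na by blast
  then obtain f g where fg: "Fract 1 h = Fract f g" "poly_over T f" "g \<in> Nset T st'" unfolding Na_def by blast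
  have g: "poly_over T g" "g \<noteq> 0" "st' (content T g) = st' T" using fg(3) unfolding Nset_def by auto
  have gfh: "g = f * h" using fg(1) eq_fract(1)[OF h0 g(2)] by simp
  have FTs: "is_submod T (modprod F T)" by (rule submod_modprod_right[OF T])
  have "set (coeffs g) \<subseteq> modprod F T"
  proof
    fix c assume "c \<in> set (coeffs g)"
    then obtain n where c: "c = coeff g n" using coeffs_sub by blast
    have "c = (\<Sum>i\<le>n. coeff h (n - i) * coeff f i)" unfolding c gfh coeff_mult by (simp add: mult.commute)
    also have "\<dots> \<in> modprod F T"
      by (rule sum_closed[OF addcl_modprod]) (use ch fg(2) in \<open>auto simp: poly_over_def intro!: modprod_mem\<close>)
    finally show "c \<in> modprod F T" .
  qed
  then have cg: "content T g \<subseteq> modprod F T" unfolding content_def by (rule gen_least[OF T FTs])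
  have FTf: "modprod F T \<in> fset T" by (rule fset_ext[OF D T DT F(1)])
  have FTT: "modprod F T \<subseteq> T" using FT_sub[OF T] F(2) DT by blast
  have cgf: "content T g \<in> fset T" using content_fset[OF T g(1,2)] by blast
  have "st' (content T g) \<subseteq> st' (modprod F T)"
    by (rule st_mono[OF sts' fset_Fbar[OF T cgf] fset_Fbar[OF T FTf] cg])
  moreover have "st' (modprod F T) \<subseteq> st' T"
    by (rule st_mono[OF sts' fset_Fbar[OF T FTf] R_Fbar[OF T] FTT])
  ultimately show "st' (modprod F T) = st' T" using g(3) by blast
qed

lemma i_iii:
  assumes dq: "domain_with_qf D" and T: "subring T" and DT: "D \<subseteq> T"
    and sts: "semistar D st" and sts': "semistar T st'" and lk: "linked D T st st'"
  shows "\<forall>E\<in>Fbar D. tilde D st E \<subseteq> tilde T st' (modprod E T)"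
proof (intro ballI subsetI)
  fix E x assume E: "E \<in> Fbar D" and x: "x \<in> tilde D st E"
  have D: "subring D" using dq by (simp add: domain_with_qf_def)
  show "x \<in> tilde T st' (modprod E T)" unfolding tilde_mem
  proof
    fix Q' assume Q': "Q' \<in> quasi_max T (star_f T st')"
    have P': "prm T Q'" by (rule qmax_prm[OF T sts' Q'])
    have qi': "quasi_ideal T (star_f T st') Q'" using Q' by (simp add: quasi_max_def)
    have Q'T: "Q' \<subseteq> T" and Q's: "is_submod T Q'" and Q'c: "star_f T st' Q' \<inter> T = Q'"
      and Q'nz: "Q' \<noteq> {0}"
      using qi' unfolding quasi_ideal_def by auto
    define P where "P = Q' \<inter> D"
    have PD: "P \<subseteq> D" unfolding P_def by blast
    have Ps: "is_submod D P" unfolding P_def is_submod_def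
      using Q's sr0[OF D] sr_add[OF D] sr_mul[OF D] DT unfolding is_submod_def by blast
    obtain q where q: "q \<in> Q'" "q \<noteq> 0" using Q'nz submod_0[OF Q's] by blast
    obtain a b where ab: "a \<in> D" "b \<in> D" "b \<noteq> 0" "q = a / b"
      using dq unfolding domain_with_qf_def by blast
    have "b * q = a" using ab by simp
    then have "a \<in> Q'" using submod_mul[OF Q's _ q(1), of b] ab(2) DT by auto
    moreover have "a \<noteq> 0" using ab q by auto
    ultimately have "a \<in> P" "a \<noteq> 0" using ab(1) unfolding P_def by auto
    then have PF: "P \<in> Fbar D" using Ps unfolding Fbar_def by auto
    note qc = quasi_closure[OF D sts PD PF]
    have ne: "star_f D st P \<inter> D \<noteq> D"
    proof
      assume "star_f D st P \<inter> D = D"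
      then have "1 \<in> star_f D st P" using sr1[OF D] by blast
      then obtain G where G: "G \<in> fset D" "G \<subseteq> P" "1 \<in> st G" unfolding sf_mem by blast
      have GD: "G \<subseteq> D" using G(2) PD by blast
      have "st G = st D" by (rule st_one[OF D sts fset_Fbar[OF D G(1)] GD G(3)])
      then have eq: "st' (modprod G T) = st' T" using lk G(1) GD unfolding linked_def by blast
      have GTf: "modprod G T \<in> fset T" by (rule fset_ext[OF D T DT G(1)])
      have GTQ: "modprod G T \<subseteq> Q'" by (rule submod_least'[OF Q's]) (use G(2) P_def in blast)
      have "1 \<in> st' T" using st_ext[OF sts' R_Fbar[OF T]] sr1[OF T] by blast
      then have "1 \<in> st' (modprod G T)" using eq by simp
      then have "1 \<in> star_f T st' Q'" using GTf GTQ unfolding sf_mem by blast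
      then have "1 \<in> Q'" using Q'c sr1[OF T] by blast
      then show False using P' unfolding prm_def by blast
    qed
    obtain Q where Q: "Q \<in> quasi_max D (star_f D st)" "star_f D st P \<inter> D \<subseteq> Q"
      using exists_qmax[OF D sts qc(1) ne] by blast
    have PQ: "P \<subseteq> Q" using qc(2) Q(2) by blast
    have locsub: "loc D Q \<subseteq> loc T Q'"
    proof
      fix y assume "y \<in> loc D Q"
      then obtain a s where as: "a \<in> D" "s \<in> D" "s \<notin> Q" "y = a / s" by (rule loc_E)
      have "s \<notin> Q'" using as PQ unfolding P_def by blast
      then show "y \<in> loc T Q'" using as DT loc_mem by blast
    qed
    have "x \<in> modprod E (loc D Q)" using x Q(1) unfolding tilde_mem by blast
    then have "x \<in> modprod E (loc T Q')" using modprod_mono[OF order_refl locsub] by blast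
    moreover have "modprod (modprod E T) (loc T Q') = modprod E (loc T Q')"
      by (rule assoc_sub[OF loc_subring[OF T P'] sr1[OF T] loc_sub[OF T P']])
    ultimately show "x \<in> modprod (modprod E T) (loc T Q')" by simp
  qed
qed

lemma iii_iv:
  assumes D: "subring D" and T: "subring T" and DT: "D \<subseteq> T"
    and sts: "semistar D st" and sts': "semistar T st'"
    and iii: "\<forall>E\<in>Fbar D. tilde D st E \<subseteq> tilde T st' (modprod E T)"
  shows "linked D T (tilde D st) (tilde T st')"
  unfolding linked_def
proof (intro allI impI, elim conjE)
  fix F assume F: "F \<in> fset D" "F \<subseteq> D" "tilde D st F = tilde D st D"
  have "1 \<in> tilde D st F" using R_sub_tilde[OF D sts] sr1[OF D] F(3) by blast
  then have one: "1 \<in> tilde T st' (modprod F T)" using iii fset_Fbar[OF D F(1)] by blast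
  have FTT: "modprod F T \<subseteq> T" using FT_sub[OF T] F(2) DT by blast
  show "tilde T st' (modprod F T) = tilde T st' T"
  proof (rule tilde_cong)
    fix Q' assume Q': "Q' \<in> quasi_max T (star_f T st')"
    have P': "prm T Q'" by (rule qmax_prm[OF T sts' Q'])
    have "1 \<in> modprod (modprod F T) (loc T Q')" using one Q' unfolding tilde_mem by blast
    then show "modprod (modprod F T) (loc T Q') = modprod T (loc T Q')"
      by (rule full_eq[OF loc_subring[OF T P'] FTT loc_sub[OF T P']])
  qed
qed

lemma iv_i:
  assumes D: "subring D" and T: "subring T" and DT: "D \<subseteq> T"
    and sts: "semistar D st" and sts': "semistar T st'"
    and lk4: "linked D T (tilde D st) (tilde T st')"
  shows "linked D T st st'"
  unfolding linked_def
proof (intro allI impI, elim conjE)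
  fix F assume F: "F \<in> fset D" "F \<subseteq> D" "st F = st D"
  have t: "tilde D st F = tilde D st D"
  proof (rule tilde_cong)
    fix Q assume Q: "Q \<in> quasi_max D (star_f D st)"
    have P: "prm D Q" by (rule qmax_prm[OF D sts Q])
    have Qc: "star_f D st Q \<inter> D = Q" using Q unfolding quasi_max_def quasi_ideal_def by blast
    have "\<not> F \<subseteq> Q"
    proof
      assume FQ: "F \<subseteq> Q"
      have "1 \<in> st D" using st_ext[OF sts R_Fbar[OF D]] sr1[OF D] by blast
      then have "1 \<in> star_f D st Q" using F FQ unfolding sf_mem by auto
      then have "1 \<in> Q" using Qc sr1[OF D] by blast
      then show False using P unfolding prm_def by blast
    qed
    then obtain f where f: "f \<in> F" "f \<notin> Q" by blast
    have fD: "f \<in> D" using f F(2) by blast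
    have "1 / f \<in> loc D Q" by (rule loc_mem[OF sr1[OF D] fD f(2)])
    moreover have "f * (1 / f) = 1" using prm_nz[OF P f(2)] by simp
    ultimately have "1 \<in> modprod F (loc D Q)" using modprod_mem[OF f(1)] by metis
    then show "modprod F (loc D Q) = modprod D (loc D Q)"
      by (rule full_eq[OF loc_subring[OF D P] F(2) loc_sub[OF D P]])
  qed
  then have t': "tilde T st' (modprod F T) = tilde T st' T" using lk4 F(1,2) unfolding linked_def by blast
  have FTf: "modprod F T \<in> fset T" by (rule fset_ext[OF D T DT F(1)])
  have FTF: "modprod F T \<in> Fbar T" by (rule fset_Fbar[OF T FTf])
  have FTT: "modprod F T \<subseteq> T" using FT_sub[OF T] F(2) DT by blast
  show "st' (modprod F T) = st' T"
  proof (rule ccontr)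
    assume ne: "st' (modprod F T) \<noteq> st' T"
    have n1: "1 \<notin> st' (modprod F T)" using st_one[OF T sts' FTF FTT] ne by blast
    note qc = quasi_closure[OF T sts' FTT FTF]
    have sf: "star_f T st' (modprod F T) = st' (modprod F T)" by (rule sf_fg[OF T sts' FTf])
    have ne2: "star_f T st' (modprod F T) \<inter> T \<noteq> T" using n1 sf sr1[OF T] by blast
    obtain Q' where Q': "Q' \<in> quasi_max T (star_f T st')" "star_f T st' (modprod F T) \<inter> T \<subseteq> Q'"
      using exists_qmax[OF T sts' qc(1) ne2] by blast
    have FTQ: "modprod F T \<subseteq> Q'" using qc(2) Q'(2) by blast
    have "1 \<in> tilde T st' T" using R_sub_tilde[OF T sts'] sr1[OF T] by blast
    then have "1 \<in> tilde T st' (modprod F T)" using t' by simp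
    then have "1 \<in> modprod (modprod F T) (loc T Q')" using Q'(1) unfolding tilde_mem by blast
    then show False using loc_notone[OF T qmax_prm[OF T sts' Q'(1)] FTQ] by blast
  qed
qed

lemma iii_v:
  assumes D: "subring D" and T: "subring T" and DT: "D \<subseteq> T"
    and sts: "semistar D st" and sts': "semistar T st'"
    and iii: "\<forall>E\<in>Fbar D. tilde D st E \<subseteq> tilde T st' (modprod E T)"
  shows "overring (tilde D st D) (tilde T st' T) \<and>
         linked (tilde D st D) (tilde T st' T) (tilde D st) (tilde T st')"
proof -
  have S1sr: "subring (tilde T st' T)" by (rule tilde_R_subring[OF T sts'])
  have R1sr: "subring (tilde D st D)" by (rule tilde_R_subring[OF D sts])
  have DT': "modprod D T = T" by (rule modprod_ring_eq[OF T sr1[OF D] DT])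
  have R1S1: "tilde D st D \<subseteq> tilde T st' T" using iii R_Fbar[OF D] DT' by metis
  have DR1: "D \<subseteq> tilde D st D" by (rule R_sub_tilde[OF D sts])
  have TS1: "T \<subseteq> tilde T st' T" by (rule R_sub_tilde[OF T sts'])
  have "linked (tilde D st D) (tilde T st' T) (tilde D st) (tilde T st')"
    unfolding linked_def
  proof (intro allI impI, elim conjE)
    fix F assume F: "F \<in> fset (tilde D st D)" "F \<subseteq> tilde D st D" "tilde D st F = tilde D st (tilde D st D)"
    have FR1: "is_submod (tilde D st D) F" "F \<noteq> {0}" using fset_Fbar[OF R1sr F(1)] unfolding Fbar_def by auto
    have "is_submod D F" using FR1(1) DR1 unfolding is_submod_def by blast
    then have FF: "F \<in> Fbar D" using FR1(2) unfolding Fbar_def by blast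
    have "1 \<in> tilde D st (tilde D st D)" unfolding tilde_mem
    proof
      fix Q assume Q: "Q \<in> quasi_max D (star_f D st)"
      have "1 * 1 \<in> modprod (tilde D st D) (loc D Q)"
        by (rule modprod_mem[OF sr1[OF R1sr] sr1[OF loc_subring[OF D qmax_prm[OF D sts Q]]]])
      then show "1 \<in> modprod (tilde D st D) (loc D Q)" by simp
    qed
    then have "1 \<in> tilde D st F" using F(3) by simp
    then have one: "1 \<in> tilde T st' (modprod F T)" using iii FF by blast
    show "tilde T st' (modprod F (tilde T st' T)) = tilde T st' (tilde T st' T)"
    proof (rule tilde_cong)
      fix Q' assume Q': "Q' \<in> quasi_max T (star_f T st')"
      have P': "prm T Q'" by (rule qmax_prm[OF T sts' Q'])
      have S1L: "tilde T st' T \<subseteq> loc T Q'" using tilde_R[OF T sts'] Q' by blast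
      have XS: "modprod F (tilde T st' T) \<subseteq> tilde T st' T"
        using FT_sub[OF S1sr] F(2) R1S1 by blast
      have "1 \<in> modprod (modprod F T) (loc T Q')" using one Q' unfolding tilde_mem by blast
      moreover have "modprod (modprod F T) (loc T Q') \<subseteq> modprod (modprod F (tilde T st' T)) (loc T Q')"
        by (rule modprod_mono[OF modprod_mono[OF order_refl TS1] order_refl])
      ultimately have "1 \<in> modprod (modprod F (tilde T st' T)) (loc T Q')" by blast
      then show "modprod (modprod F (tilde T st' T)) (loc T Q') = modprod (tilde T st' T) (loc T Q')"
        by (rule full_eq[OF loc_subring[OF T P'] XS S1L])
    qed
  qed
  then show ?thesis unfolding overring_def using S1sr R1S1 by blast
qed

lemma v_iv:
  assumes D: "subring D" and T: "subring T" and DT: "D \<subseteq> T"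
    and sts: "semistar D st" and sts': "semistar T st'"
    and ov: "overring (tilde D st D) (tilde T st' T)"
    and lk5: "linked (tilde D st D) (tilde T st' T) (tilde D st) (tilde T st')"
  shows "linked D T (tilde D st) (tilde T st')"
  unfolding linked_def
proof (intro allI impI, elim conjE)
  fix F assume F: "F \<in> fset D" "F \<subseteq> D" "tilde D st F = tilde D st D"
  have S1sr: "subring (tilde T st' T)" by (rule tilde_R_subring[OF T sts'])
  have R1sr: "subring (tilde D st D)" by (rule tilde_R_subring[OF D sts])
  have R1S1: "tilde D st D \<subseteq> tilde T st' T" using ov unfolding overring_def by blast
  have DR1: "D \<subseteq> tilde D st D" by (rule R_sub_tilde[OF D sts])
  have TS1: "T \<subseteq> tilde T st' T" by (rule R_sub_tilde[OF T sts'])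
  have F1f: "modprod F (tilde D st D) \<in> fset (tilde D st D)" by (rule fset_ext[OF D R1sr DR1 F(1)])
  have F1R1: "modprod F (tilde D st D) \<subseteq> tilde D st D" using FT_sub[OF R1sr] F(2) DR1 by blast
  have "tilde D st (modprod F (tilde D st D)) = tilde D st F"
  proof (rule tilde_cong)
    fix Q assume Q: "Q \<in> quasi_max D (star_f D st)"
    have P: "prm D Q" by (rule qmax_prm[OF D sts Q])
    have "tilde D st D \<subseteq> loc D Q" using tilde_R[OF D sts] Q by blast
    then show "modprod (modprod F (tilde D st D)) (loc D Q) = modprod F (loc D Q)"
      by (rule assoc_sub[OF loc_subring[OF D P] sr1[OF R1sr]])
  qed
  also have "\<dots> = tilde D st D" by (rule F(3))
  also have "\<dots> = tilde D st (tilde D st D)"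
  proof (rule tilde_cong)
    fix Q assume Q: "Q \<in> quasi_max D (star_f D st)"
    have P: "prm D Q" by (rule qmax_prm[OF D sts Q])
    have "tilde D st D \<subseteq> loc D Q" using tilde_R[OF D sts] Q by blast
    then have "modprod (tilde D st D) (loc D Q) = loc D Q"
      by (rule modprod_ring_eq[OF loc_subring[OF D P] sr1[OF R1sr]])
    moreover have "modprod D (loc D Q) = loc D Q"
      by (rule modprod_ring_eq[OF loc_subring[OF D P] sr1[OF D] loc_sub[OF D P]])
    ultimately show "modprod D (loc D Q) = modprod (tilde D st D) (loc D Q)" by simp
  qed
  finally have "tilde T st' (modprod (modprod F (tilde D st D)) (tilde T st' T)) = tilde T st' (tilde T st' T)"
    using lk5 F1f F1R1 unfolding linked_def by blast
  moreover have "modprod (modprod F (tilde D st D)) (tilde T st' T) = modprod F (tilde T st' T)"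
    by (rule assoc_sub[OF S1sr sr1[OF R1sr] R1S1])
  ultimately have t2: "tilde T st' (modprod F (tilde T st' T)) = tilde T st' (tilde T st' T)" by simp
  have "tilde T st' (modprod F T) = tilde T st' (modprod F (tilde T st' T))"
  proof (rule tilde_cong)
    fix Q' assume Q': "Q' \<in> quasi_max T (star_f T st')"
    have P': "prm T Q'" by (rule qmax_prm[OF T sts' Q'])
    have S1L: "tilde T st' T \<subseteq> loc T Q'" using tilde_R[OF T sts'] Q' by blast
    have "modprod (modprod F T) (loc T Q') = modprod F (loc T Q')"
      by (rule assoc_sub[OF loc_subring[OF T P'] sr1[OF T] loc_sub[OF T P']])
    moreover have "modprod (modprod F (tilde T st' T)) (loc T Q') = modprod F (loc T Q')"
      by (rule assoc_sub[OF loc_subring[OF T P'] sr1[OF S1sr] S1L])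
    ultimately show "modprod (modprod F T) (loc T Q') = modprod (modprod F (tilde T st' T)) (loc T Q')"
      by simp
  qed
  also have "\<dots> = tilde T st' (tilde T st' T)" by (rule t2)
  also have "\<dots> = tilde T st' T"
  proof (rule tilde_cong)
    fix Q' assume Q': "Q' \<in> quasi_max T (star_f T st')"
    have P': "prm T Q'" by (rule qmax_prm[OF T sts' Q'])
    have S1L: "tilde T st' T \<subseteq> loc T Q'" using tilde_R[OF T sts'] Q' by blast
    have "modprod (tilde T st' T) (loc T Q') = loc T Q'"
      by (rule modprod_ring_eq[OF loc_subring[OF T P'] sr1[OF S1sr] S1L])
    moreover have "modprod T (loc T Q') = loc T Q'"
      by (rule modprod_ring_eq[OF loc_subring[OF T P'] sr1[OF T] loc_sub[OF T P']])
    ultimately show "modprod (tilde T st' T) (loc T Q') = modprod T (loc T Q')" by simp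
  qed
  finally show "tilde T st' (modprod F T) = tilde T st' T" .
qed

theorem theorem3p8:
  fixes D T :: "'k::field set" and st st' :: "'k set \<Rightarrow> 'k set"
  assumes "domain_with_qf D" and "overring D T"
    and "semistar D st" and "semistar T st'"
  shows "(linked D T st st' \<longleftrightarrow> Na D st \<subseteq> Na T st')
    \<and> (Na D st \<subseteq> Na T st' \<longleftrightarrow> (\<forall>E\<in>Fbar D. tilde D st E \<subseteq> tilde T st' (modprod E T)))
    \<and> ((\<forall>E\<in>Fbar D. tilde D st E \<subseteq> tilde T st' (modprod E T)) \<longleftrightarrow> linked D T (tilde D st) (tilde T st'))
    \<and> (linked D T (tilde D st) (tilde T st') \<longleftrightarrow>
        (overring (tilde D st D) (tilde T st' T) \<and>
         linked (tilde D st D) (tilde T st' T) (tilde D st) (tilde T st')))"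
proof -
  have D: "subring D" using assms(1) by (simp add: domain_with_qf_def)
  have T: "subring T" and DT: "D \<subseteq> T" using assms(2) by (auto simp: overring_def)
  note a = D T DT assms(3,4)
  have 1: "linked D T st st' \<longleftrightarrow> Na D st \<subseteq> Na T st'"
    using i_ii[OF D T DT] ii_i[OF a] by blast
  have 2: "linked D T st st' \<Longrightarrow> (\<forall>E\<in>Fbar D. tilde D st E \<subseteq> tilde T st' (modprod E T))"
    using i_iii[OF assms(1) T DT assms(3,4)] by blast
  have 3: "(\<forall>E\<in>Fbar D. tilde D st E \<subseteq> tilde T st' (modprod E T)) \<Longrightarrow> linked D T (tilde D st) (tilde T st')"
    using iii_iv[OF a] by blast
  have 4: "linked D T (tilde D st) (tilde T st') \<Longrightarrow> linked D T st st'"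
    using iv_i[OF a] by blast
  have 5: "(\<forall>E\<in>Fbar D. tilde D st E \<subseteq> tilde T st' (modprod E T)) \<Longrightarrow>
      overring (tilde D st D) (tilde T st' T) \<and> linked (tilde D st D) (tilde T st' T) (tilde D st) (tilde T st')"
    using iii_v[OF a] by blast
  have 6: "overring (tilde D st D) (tilde T st' T) \<Longrightarrow> linked (tilde D st D) (tilde T st' T) (tilde D st) (tilde T st') \<Longrightarrow>
      linked D T (tilde D st) (tilde T st')"
    using v_iv[OF a] by blast
  show ?thesis using 1 2 3 4 5 6 by blast
qed

end
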